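(* Let $G$ be a connected graph of order $n$ and size $m$, with vertex degrees $d_1, \ldots, d_n$ and normalized Laplacian matrix $\mathcal{L}$. Then $G$ has $k$ distinct $\mathcal{L}$-eigenvalues, where $2 \le k \le n$, if and only if there are $k-1$ distinct non-zero real numbers $\mu_1, \ldots, \mu_{k-1}$ such that (i) $\mathcal{L} - \mu_i I$ is a singular matrix for every $1 \le i \le k-1$; and (ii) $\prod_{i=1}^{k-1}(\mathcal{L} - \mu_i I) = (-1)^{k-1}\frac{\prod_{i=1}^{k-1}\mu_i}{2m}\,\alpha\alpha^T$, where $\alpha^T = (\sqrt{d_1}, \sqrt{d_2}, \ldots, \sqrt{d_n})$. Moreover, in this case $\mu_1, \ldots, \mu_{k-1}, 0$ are exactly the $k$ distinct $\mathcal{L}$-eigenvalues of $G$.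
   Context: For a simple undirected graph with adjacency matrix $A$ and diagonal degree matrix $D$, the Laplacian is $L = D - A$ and the normalized Laplacian is $\mathcal{L} = D^{-1/2} L D^{-1/2}$; $\mathcal{L}$-eigenvalues are the eigenvalues of $\mathcal{L}$. $I$ is the identity matrix. *)

theory Defs
  imports "HOL-Analysis.Analysis"
begin

definition simple_graph :: "('n \<Rightarrow> 'n \<Rightarrow> bool) \<Rightarrow> bool" where
  "simple_graph E \<longleftrightarrow> (\<forall>u v. E u v \<longrightarrow> E v u) \<and> (\<forall>u. \<not> E u u)"

definition connected_graph :: "('n \<Rightarrow> 'n \<Rightarrow> bool) \<Rightarrow> bool" where
  "connected_graph E \<longleftrightarrow> (\<forall>u v. E\<^sup>*\<^sup>* u v)"

definition degree :: "('n::finite \<Rightarrow> 'n \<Rightarrow> bool) \<Rightarrow> 'n \<Rightarrow> nat" where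
  "degree E v = card {u. E v u}"

definition graph_size :: "('n::finite \<Rightarrow> 'n \<Rightarrow> bool) \<Rightarrow> nat" where
  "graph_size E = card {{u, v} | u v. E u v}"

definition adj_matrix :: "('n::finite \<Rightarrow> 'n \<Rightarrow> bool) \<Rightarrow> real^'n^'n" where
  "adj_matrix E = (\<chi> i j. if E i j then 1 else 0)"

definition deg_matrix :: "('n::finite \<Rightarrow> 'n \<Rightarrow> bool) \<Rightarrow> real^'n^'n" where
  "deg_matrix E = (\<chi> i j. if i = j then real (degree E i) else 0)"

text \<open>D^(-1/2) (for connected graphs with at least 2 vertices all degrees are positive).\<close>
definition deg_inv_sqrt_matrix :: "('n::finite \<Rightarrow> 'n \<Rightarrow> bool) \<Rightarrow> real^'n^'n" where
  "deg_inv_sqrt_matrix E = (\<chi> i j. if i = j then 1 / sqrt (real (degree E i)) else 0)"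

definition laplacian :: "('n::finite \<Rightarrow> 'n \<Rightarrow> bool) \<Rightarrow> real^'n^'n" where
  "laplacian E = deg_matrix E - adj_matrix E"

definition norm_laplacian :: "('n::finite \<Rightarrow> 'n \<Rightarrow> bool) \<Rightarrow> real^'n^'n" where
  "norm_laplacian E = deg_inv_sqrt_matrix E ** laplacian E ** deg_inv_sqrt_matrix E"

definition matrix_eigenvalues :: "real^'n^'n \<Rightarrow> real set" where
  "matrix_eigenvalues M = {c. \<exists>v. v \<noteq> 0 \<and> M *v v = c *\<^sub>R v}"

fun shifted_prod :: "real^'n^'n \<Rightarrow> (nat \<Rightarrow> real) \<Rightarrow> nat \<Rightarrow> real^'n^'n" where
  "shifted_prod M mu 0 = mat 1"
| "shifted_prod M mu (Suc j) = shifted_prod M mu j ** (M - mu (Suc j) *\<^sub>R mat 1)"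

definition sqrt_deg_vec :: "('n::finite \<Rightarrow> 'n \<Rightarrow> bool) \<Rightarrow> real^'n" where
  "sqrt_deg_vec E = (\<chi> i. sqrt (real (degree E i)))"

definition outer :: "real^'n \<Rightarrow> real^'n^'n" where
  "outer a = (\<chi> i j. a $ i * a $ j)"

end

theory Submission
  imports Defs
begin

lemma dot_transpose: "((A::real^'n^'m) *v x) \<bullet> y = x \<bullet> (transpose A *v y)"
  by (simp add: inner_vec_def matrix_vector_mult_def transpose_def sum_distrib_left
      sum_distrib_right mult_ac) (rule sum.swap)

lemma mvs: "(A::real^'n^'m) *v (c *\<^sub>R x) = c *\<^sub>R (A *v x)"
  by (simp add: vec_eq_iff matrix_vector_mult_def sum_distrib_left mult_ac)

lemma quad_zero:
  fixes a b :: real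
  assumes "\<And>t. a*t + b*t^2 \<le> 0" shows "a = 0"
proof (rule ccontr)
  assume a: "a \<noteq> 0"
  define c where "c = 2*(\<bar>b\<bar>+1)"
  define t where "t = a / c"
  have c: "c > 0" by (simp add: c_def add_pos_nonneg)
  define s where "s = a*t"
  have s: "s = a^2 / c" by (simp add: s_def t_def power2_eq_square)
  have spos: "s > 0" using a c by (simp add: s)
  have "\<bar>b\<bar> * t^2 = s * (\<bar>b\<bar> / c)" by (simp add: s t_def power2_eq_square)
  also have "\<dots> \<le> s * (1/2)"
    using spos c by (intro mult_left_mono) (auto simp: c_def divide_simps)
  finally have "\<bar>b\<bar> * t^2 \<le> s/2" by simp
  moreover have "- (\<bar>b\<bar> * t^2) \<le> b * t^2"
  proof -
    have "(- \<bar>b\<bar>) * t^2 \<le> b * t^2" by (rule mult_right_mono) simp_all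
    thus ?thesis by simp
  qed
  ultimately have "a*t + b*t^2 > 0" using spos s_def by linarith
  with assms show False by (meson not_le)
qed

lemma sym_eig_in_subspace:
  fixes L :: "real^'n^'n"
  assumes sym: "transpose L = L" and W: "subspace W" and ne: "W \<noteq> {0}"
    and inv: "\<forall>x\<in>W. L *v x \<in> W"
  shows "\<exists>x\<in>W. x \<noteq> 0 \<and> (\<exists>c. L *v x = c *\<^sub>R x)"
proof -
  define S where "S = W \<inter> sphere 0 1"
  have cS: "compact S" unfolding S_def
    by (rule closed_Int_compact[OF closed_subspace[OF W] compact_sphere])
  obtain w where w: "w \<in> W" "w \<noteq> 0" using ne W subspace_0 by blast
  have "w /\<^sub>R norm w \<in> S" using w W unfolding S_def
    by (simp add: subspace_scale)
  hence neS: "S \<noteq> {}" by blast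
  define f where "f x = x \<bullet> (L *v x)" for x
  have "continuous_on S f" unfolding f_def
    by (intro continuous_intros linear_continuous_on matrix_vector_mul_linear)
  then obtain x0 where x0: "x0 \<in> S" "\<And>y. y \<in> S \<Longrightarrow> f y \<le> f x0"
    using continuous_attains_sup[OF cS neS] by blast
  define lam where "lam = f x0"
  have x0W: "x0 \<in> W" and nx0: "norm x0 = 1" using x0(1) by (auto simp: S_def)
  have x0x0: "x0 \<bullet> x0 = 1" using nx0 by (simp add: dot_square_norm)
  have bound: "f z \<le> lam * (z \<bullet> z)" if zW: "z \<in> W" for z
  proof (cases "z = 0")
    case True thus ?thesis by (simp add: f_def)
  next
    case False
    let ?u = "z /\<^sub>R norm z"
    have "?u \<in> S" using zW False W by (simp add: S_def subspace_scale)
    hence "f ?u \<le> lam" using x0 lam_def by simp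
    moreover have "f ?u = f z / (norm z)^2"
      by (simp add: f_def mvs power2_eq_square divide_inverse)
    moreover have "(norm z)^2 = z \<bullet> z" by (simp add: dot_square_norm)
    moreover have "norm z > 0" using False by simp
    ultimately show ?thesis by (simp add: divide_le_eq)
  qed
  define r where "r = L *v x0 - lam *\<^sub>R x0"
  have symdot: "a \<bullet> (L *v b) = (L *v a) \<bullet> b" for a b
    using dot_transpose[of L a b] sym by (simp add: inner_commute)
  have rW: "r \<in> W" unfolding r_def using inv x0W W
    by (simp add: subspace_diff subspace_scale)
  have orth: "y \<bullet> r = 0" if yW: "y \<in> W" for y
  proof -
    have "2 * (y \<bullet> r) * t + (y \<bullet> (L *v y) - lam * (y \<bullet> y)) * t^2 \<le> 0" for t
    proof -
      have zW: "x0 + t *\<^sub>R y \<in> W" using x0W yW W by (simp add: subspace_add subspace_scale)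
      have "f (x0 + t *\<^sub>R y) \<le> lam * ((x0 + t *\<^sub>R y) \<bullet> (x0 + t *\<^sub>R y))"
        using bound[OF zW] .
      moreover have "f (x0 + t *\<^sub>R y) = lam + 2*t*(y \<bullet> (L *v x0)) + t^2 * (y \<bullet> (L *v y))"
        using symdot[of x0 y]
        by (simp add: f_def lam_def matrix_vector_right_distrib mvs
            inner_add_left inner_add_right power2_eq_square inner_commute algebra_simps)
      moreover have "(x0 + t *\<^sub>R y) \<bullet> (x0 + t *\<^sub>R y) = 1 + 2*t*(y \<bullet> x0) + t^2*(y \<bullet> y)"
        using x0x0 by (simp add: inner_add_left inner_add_right power2_eq_square inner_commute algebra_simps)
      moreover have "y \<bullet> r = y \<bullet> (L *v x0) - lam * (y \<bullet> x0)"
        by (simp add: r_def inner_diff_right)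
      ultimately have "(lam + 2*t*(y \<bullet> (L *v x0)) + t^2 * (y \<bullet> (L *v y)))
          - lam * (1 + 2*t*(y \<bullet> x0) + t^2*(y \<bullet> y)) \<le> 0"
        and yr: "y \<bullet> r = y \<bullet> (L *v x0) - lam * (y \<bullet> x0)" by simp_all
      moreover have "(lam + 2*t*(y \<bullet> (L *v x0)) + t^2 * (y \<bullet> (L *v y)))
          - lam * (1 + 2*t*(y \<bullet> x0) + t^2*(y \<bullet> y)) =
          2 * (y \<bullet> r) * t + (y \<bullet> (L *v y) - lam * (y \<bullet> y)) * t^2"
        unfolding yr by (simp add: algebra_simps)
      ultimately show ?thesis by simp
    qed
    hence "2 * (y \<bullet> r) = 0" by (rule quad_zero)
    thus ?thesis by simp
  qed
  have "r = 0" using orth[OF rW] by simp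
  hence "L *v x0 = lam *\<^sub>R x0" by (simp add: r_def)
  moreover have "x0 \<noteq> 0" using nx0 by auto
  ultimately show ?thesis using x0W by blast
qed

lemma mm_diff_r: "(A::real^'n^'m) ** (B - C) = A ** B - A ** C"
  by (simp add: vec_eq_iff matrix_matrix_mult_def algebra_simps sum_subtractf)
lemma mm_diff_l: "((B::real^'n^'m) - C) ** A = B ** A - C ** A"
  by (simp add: vec_eq_iff matrix_matrix_mult_def algebra_simps sum_subtractf)
lemma transpose_diff: "transpose ((A::real^'n^'m) - B) = transpose A - transpose B"
  by (simp add: vec_eq_iff transpose_def)

lemma shift_comm: "((M::real^'n^'n) - c *\<^sub>R mat 1) ** M = M ** (M - c *\<^sub>R mat 1)"
  by (simp add: mm_diff_r mm_diff_l matrix_scalar_ac scalar_matrix_assoc[symmetric])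

lemma sp_comm: "shifted_prod M mu j ** M = M ** shifted_prod M mu j"
proof (induction j)
  case 0 thus ?case by simp
next
  case (Suc j)
  have "shifted_prod M mu (Suc j) ** M = shifted_prod M mu j ** ((M - mu (Suc j) *\<^sub>R mat 1) ** M)"
    by (simp add: matrix_mul_assoc)
  also have "\<dots> = (shifted_prod M mu j ** M) ** (M - mu (Suc j) *\<^sub>R mat 1)"
    by (simp add: shift_comm matrix_mul_assoc)
  also have "\<dots> = M ** shifted_prod M mu (Suc j)"
    by (simp add: Suc matrix_mul_assoc)
  finally show ?case .
qed

lemma sp_comm_shift: "shifted_prod M mu j ** (M - c *\<^sub>R mat 1) = (M - c *\<^sub>R mat 1) ** shifted_prod M mu j"
  by (simp add: mm_diff_r mm_diff_l sp_comm matrix_scalar_ac scalar_matrix_assoc[symmetric])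

lemma sp_sym: assumes "transpose M = M"
  shows "transpose (shifted_prod M mu j) = shifted_prod M mu j"
proof (induction j)
  case 0 thus ?case by (simp add: transpose_mat)
next
  case (Suc j)
  show ?case using assms
    by (simp add: matrix_transpose_mul Suc transpose_diff transpose_scalar transpose_mat sp_comm_shift)
qed

lemma sp_eig: assumes "M *v v = c *\<^sub>R v"
  shows "shifted_prod M mu j *v v = (\<Prod>i\<in>{1..j}. c - mu i) *\<^sub>R v"
proof (induction j)
  case 0 thus ?case by simp
next
  case (Suc j)
  have "(M - mu (Suc j) *\<^sub>R mat 1) *v v = (c - mu (Suc j)) *\<^sub>R v"
    using assms by (simp add: matrix_vector_mult_diff_rdistrib scaleR_matrix_vector_assoc[symmetric]
        algebra_simps)
  hence "shifted_prod M mu (Suc j) *v v = (c - mu (Suc j)) *\<^sub>R (shifted_prod M mu j *v v)"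
    by (simp add: matrix_vector_mul_assoc[symmetric] mvs)
  also have "\<dots> = (\<Prod>i\<in>{1..Suc j}. c - mu i) *\<^sub>R v"
    by (simp add: Suc prod.cl_ivl_Suc mult_ac)
  finally show ?case .
qed

lemma not_inv_iff: "\<not> invertible (A::real^'n^'n) \<longleftrightarrow> (\<exists>v. v \<noteq> 0 \<and> A *v v = 0)"
  by (metis invertible_def matrix_left_invertible_ker matrix_left_right_inverse)

lemma eig_iff: "c \<in> matrix_eigenvalues M \<longleftrightarrow> \<not> invertible (M - c *\<^sub>R mat 1)"
  unfolding not_inv_iff matrix_eigenvalues_def
  by (simp add: matrix_vector_mult_diff_rdistrib scaleR_matrix_vector_assoc[symmetric])

lemma deg_pos:
  fixes E :: "'n::finite \<Rightarrow> 'n \<Rightarrow> bool"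
  assumes "connected_graph E" "2 \<le> CARD('n)"
  shows "degree E i > 0"
proof -
  obtain j :: 'n where "j \<noteq> i"
  proof -
    have "card (UNIV - {i}) \<ge> 1" using assms(2) by (simp add: card_Diff_singleton)
    hence "UNIV - {i} \<noteq> {}" by (metis card.empty not_one_le_zero)
    thus ?thesis using that by blast
  qed
  moreover have "E\<^sup>*\<^sup>* i j" using assms(1) by (simp add: connected_graph_def)
  ultimately obtain y where "E i y" by (metis converse_rtranclpE)
  hence "{u. E i u} \<noteq> {}" by blast
  thus ?thesis by (simp add: degree_def card_gt_0_iff)
qed

lemma sum_delta_mult: fixes i :: "'n::finite" shows "(\<Sum>k\<in>UNIV. (if i = k then a k else 0) * (b k::real)) = a i * b i"
proof -
  have "(\<Sum>k\<in>UNIV. (if i = k then a k else 0) * (b k::real)) = (\<Sum>k\<in>UNIV. if i = k then a k * b k else 0)" by (rule sum.cong) auto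
  thus ?thesis by simp
qed
lemma sum_delta_mult2: fixes j :: "'n::finite" shows "(\<Sum>k\<in>UNIV. (b k::real) * (if k = j then a k else 0)) = b j * a j"
proof -
  have "(\<Sum>k\<in>UNIV. (b k::real) * (if k = j then a k else 0)) = (\<Sum>k\<in>UNIV. if j = k then b k * a k else 0)" by (rule sum.cong) auto
  thus ?thesis by simp
qed

lemma diag_left: "(deg_inv_sqrt_matrix E ** X) $ i $ j = X $ i $ j / sqrt (degree E i)"
  by (simp add: matrix_matrix_mult_def deg_inv_sqrt_matrix_def sum_delta_mult)

lemma diag_right: "(X ** deg_inv_sqrt_matrix E) $ i $ j = X $ i $ j / sqrt (degree E j)"
  by (simp add: matrix_matrix_mult_def deg_inv_sqrt_matrix_def sum_delta_mult2)

lemma nl_entry: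
  fixes E :: "'n::finite \<Rightarrow> 'n \<Rightarrow> bool"
  assumes sg: "simple_graph E" and dp: "\<And>i. degree E i > 0"
  shows "norm_laplacian E $ i $ j =
     (if i = j then 1 else 0) - (if E i j then 1 / (sqrt (degree E i) * sqrt (degree E j)) else 0)"
proof -
  have "norm_laplacian E $ i $ j = laplacian E $ i $ j / sqrt (degree E i) / sqrt (degree E j)"
    unfolding norm_laplacian_def by (simp add: diag_left diag_right)
  moreover have "laplacian E $ i $ j = (if i = j then real (degree E i) else 0) - (if E i j then 1 else 0)"
    by (simp add: laplacian_def deg_matrix_def adj_matrix_def)
  moreover have "\<not> E i i" using sg by (simp add: simple_graph_def)
  moreover have "sqrt (degree E i) > 0" using dp[of i] by simp
  ultimately show ?thesis
    by (cases "i = j") (auto simp: divide_simps)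
qed

lemma nl_sym:
  fixes E :: "'n::finite \<Rightarrow> 'n \<Rightarrow> bool"
  assumes sg: "simple_graph E" and dp: "\<And>i. degree E i > 0"
  shows "transpose (norm_laplacian E) = norm_laplacian E"
proof -
  have "E i j = E j i" for i j using sg by (auto simp: simple_graph_def)
  thus ?thesis
    by (simp add: vec_eq_iff transpose_def nl_entry[OF sg dp] mult.commute)
qed

lemma nl_mult:
  fixes E :: "'n::finite \<Rightarrow> 'n \<Rightarrow> bool"
  assumes sg: "simple_graph E" and dp: "\<And>i. degree E i > 0"
  shows "(norm_laplacian E *v x) $ i =
    x $ i - (\<Sum>j\<in>{j. E i j}. x $ j / (sqrt (degree E i) * sqrt (degree E j)))"
proof -
  have "(norm_laplacian E *v x) $ i = (\<Sum>j\<in>UNIV. ((if i = j then 1 else 0) -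
     (if E i j then 1 / (sqrt (degree E i) * sqrt (degree E j)) else 0)) * x $ j)"
    by (simp add: matrix_vector_mult_def nl_entry[OF sg dp])
  also have "\<dots> = (\<Sum>j\<in>UNIV. (if i = j then x $ j else 0)) -
     (\<Sum>j\<in>UNIV. (if E i j then x $ j / (sqrt (degree E i) * sqrt (degree E j)) else 0))"
    unfolding sum_subtractf[symmetric] using sg by (intro sum.cong) (auto simp: simple_graph_def)
  also have "\<dots> = x $ i - (\<Sum>j\<in>{j. E i j}. x $ j / (sqrt (degree E i) * sqrt (degree E j)))"
    by (simp add: sum.If_cases)
  finally show ?thesis .
qed

lemma nl_alpha:
  fixes E :: "'n::finite \<Rightarrow> 'n \<Rightarrow> bool"
  assumes sg: "simple_graph E" and dp: "\<And>i. degree E i > 0"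
  shows "norm_laplacian E *v sqrt_deg_vec E = 0"
proof -
  have "(\<Sum>j\<in>{j. E i j}. sqrt (degree E j) / (sqrt (degree E i) * sqrt (degree E j)))
        = sqrt (degree E i)" for i
  proof -
    have "(\<Sum>j\<in>{j. E i j}. sqrt (degree E j) / (sqrt (degree E i) * sqrt (degree E j)))
        = (\<Sum>j\<in>{j. E i j}. 1 / sqrt (degree E i))"
      using dp by (intro sum.cong) auto
    also have "\<dots> = degree E i / sqrt (degree E i)" by (simp add: degree_def)
    also have "\<dots> = sqrt (degree E i)" using dp[of i]
      by (metis of_nat_0_le_iff real_div_sqrt)
    finally show ?thesis .
  qed
  thus ?thesis by (simp add: vec_eq_iff nl_mult[OF sg dp] sqrt_deg_vec_def)
qed

lemma nl_kernel:
  fixes E :: "'n::finite \<Rightarrow> 'n \<Rightarrow> bool"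
  assumes sg: "simple_graph E" and cg: "connected_graph E" and dp: "\<And>i. degree E i > 0"
    and x: "norm_laplacian E *v x = 0"
  shows "\<exists>t. x = t *\<^sub>R sqrt_deg_vec E"
proof -
  define s where "s i = sqrt (real (degree E i))" for i
  have sp: "s i > 0" for i using dp[of i] by (simp add: s_def)
  define y where "y j = x $ j / s j" for j
  have xy: "x $ j = y j * s j" for j using sp[of j] by (simp add: y_def)
  have key: "(\<Sum>j\<in>{j. E i j}. y i - y j) = 0" for i
  proof -
    have "x $ i = (\<Sum>j\<in>{j. E i j}. x $ j / (s i * s j))"
      using x nl_mult[OF sg dp, of x i] by (simp add: s_def)
    also have "\<dots> = (\<Sum>j\<in>{j. E i j}. y j / s i)"
      using sp by (intro sum.cong) (auto simp: xy less_imp_neq[OF sp, symmetric])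
    also have "\<dots> = (\<Sum>j\<in>{j. E i j}. y j) / s i" by (simp add: sum_divide_distrib)
    finally have "y i * s i * s i = (\<Sum>j\<in>{j. E i j}. y j)" using sp[of i] by (simp add: xy field_simps)
    moreover have "s i * s i = card {j. E i j}" using dp[of i] by (simp add: s_def degree_def)
    ultimately have "(\<Sum>j\<in>{j. E i j}. y j) = card {j. E i j} * y i"
      by (metis mult.assoc mult.commute)
    thus ?thesis by (simp add: sum_subtractf)
  qed
  define m where "m = Max (range y)"
  have ym: "y j \<le> m" for j by (simp add: m_def)
  have "m \<in> range y" unfolding m_def by (rule Max_in) auto
  then obtain i0 where i0: "y i0 = m" by auto
  have step: "y v = m" if "y u = m" "E u v" for u v
  proof -
    have "\<forall>j\<in>{j. E u j}. y u - y j = 0"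
      using key[of u] ym that(1) by (subst sum_nonneg_eq_0_iff[symmetric]) auto
    thus ?thesis using that by auto
  qed
  have "y v = m" for v
  proof -
    have "E\<^sup>*\<^sup>* i0 v" using cg by (simp add: connected_graph_def)
    thus ?thesis by (induction rule: rtranclp_induct) (use i0 step in auto)
  qed
  hence "x = m *\<^sub>R sqrt_deg_vec E" by (simp add: vec_eq_iff xy sqrt_deg_vec_def s_def)
  thus ?thesis by blast
qed

lemma handshake:
  fixes E :: "'n::finite \<Rightarrow> 'n \<Rightarrow> bool"
  assumes sg: "simple_graph E"
  shows "(\<Sum>i\<in>UNIV. real (degree E i)) = 2 * real (graph_size E)"
proof -
  define P where "P = {(u,v). E u v}"
  define f where "f = (\<lambda>(u::'n,v). {u,v})"
  have "(\<Sum>i\<in>UNIV. degree E i) = card (SIGMA i:UNIV. {u. E i u})"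
    by (simp add: card_SigmaI degree_def)
  also have "(SIGMA i:UNIV. {u. E i u}) = P" by (auto simp: P_def)
  finally have s1: "(\<Sum>i\<in>UNIV. degree E i) = card P" .
  have edges: "{{u, v} | u v. E u v} = f ` P" by (auto simp: f_def P_def)
  define fib where "fib e = {p\<in>P. f p = e}" for e
  have Pu: "P = (\<Union>e\<in>f ` P. fib e)" by (auto simp: fib_def)
  have "card (\<Union>e\<in>f ` P. fib e) = (\<Sum>e\<in>f ` P. card (fib e))"
    by (rule card_UN_disjoint) (auto simp: fib_def)
  hence "card P = (\<Sum>e\<in>f ` P. card (fib e))" using Pu by simp
  also have "\<dots> = (\<Sum>e\<in>f ` P. 2)"
  proof (rule sum.cong)
    fix e assume "e \<in> f ` P"
    then obtain u v where uv: "E u v" "e = {u,v}" by (auto simp: P_def f_def)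
    have neq: "u \<noteq> v" using uv sg by (auto simp: simple_graph_def)
    have "fib e = {(u,v),(v,u)}" using uv sg
      by (auto simp: fib_def P_def f_def doubleton_eq_iff simple_graph_def)
    thus "card (fib e) = 2" using neq by simp
  qed simp
  finally have "card P = 2 * card (f ` P)" by simp
  thus ?thesis using s1 edges unfolding graph_size_def
    by (metis of_nat_mult of_nat_numeral of_nat_sum)
qed

lemma outer_mult: "outer a *v v = (a \<bullet> v) *\<^sub>R (a::real^'n)"
  by (simp add: vec_eq_iff matrix_vector_mult_def outer_def inner_vec_def sum_distrib_left mult_ac)

lemma suff:
  fixes L :: "real^'n^'n" and a :: "real^'n"
  assumes sym: "transpose L = L" and La: "L *v a = 0" and a0: "a \<noteq> 0"
    and ev: "\<forall>i\<in>{1..K}. \<not> invertible (L - mu i *\<^sub>R mat 1)"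
    and P: "shifted_prod L mu K = c *\<^sub>R outer a"
  shows "matrix_eigenvalues L = insert 0 (mu ` {1..K})"
proof
  show "insert 0 (mu ` {1..K}) \<subseteq> matrix_eigenvalues L"
  proof -
    have "mu i \<in> matrix_eigenvalues L" if "i\<in>{1..K}" for i using ev that eig_iff by blast
    moreover have "0 \<in> matrix_eigenvalues L" using La a0 by (auto simp: matrix_eigenvalues_def)
    ultimately show ?thesis by auto
  qed
next
  show "matrix_eigenvalues L \<subseteq> insert 0 (mu ` {1..K})"
  proof
    fix l assume "l \<in> matrix_eigenvalues L"
    then obtain v where v: "v \<noteq> 0" "L *v v = l *\<^sub>R v" by (auto simp: matrix_eigenvalues_def)
    show "l \<in> insert 0 (mu ` {1..K})"
    proof (cases "l = 0")
      case False
      have "l * (v \<bullet> a) = (L *v v) \<bullet> a" using v by simp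
      also have "\<dots> = v \<bullet> (L *v a)" using dot_transpose[of L v a] sym by simp
      finally have "v \<bullet> a = 0" using La False by simp
      hence "shifted_prod L mu K *v v = 0"
        by (simp add: P scaleR_matrix_vector_assoc[symmetric] outer_mult inner_commute)
      hence "(\<Prod>i\<in>{1..K}. l - mu i) = 0" using sp_eig[OF v(2), of mu K] v(1) by simp
      thus ?thesis by auto
    qed simp
  qed
qed

lemma nec:
  fixes L :: "real^'n^'n" and a :: "real^'n"
  assumes sym: "transpose L = L"
    and ker: "\<And>x. L *v x = 0 \<Longrightarrow> \<exists>t. x = t *\<^sub>R a"
    and apos: "\<And>i. a $ i > 0" and La: "L *v a = 0"
    and eig: "matrix_eigenvalues L = insert 0 (mu ` {1..K})"
  shows "shifted_prod L mu K = ((\<Prod>i\<in>{1..K}. - mu i) / (a \<bullet> a)) *\<^sub>R outer a"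
proof -
  define P where "P = shifted_prod L mu K"
  define Q where "Q = L ** P"
  have Psym: "transpose P = P" unfolding P_def by (rule sp_sym[OF sym])
  have Qsym: "transpose Q = Q" unfolding Q_def matrix_transpose_mul Psym sym
    unfolding P_def by (rule sp_comm)
  have Q0: "Q = 0"
  proof (rule ccontr)
    assume "Q \<noteq> 0"
    then obtain u0 where "Q *v u0 \<noteq> 0" by (metis matrix_eq matrix_vector_mult_0)
    define W where "W = range ((*v) Q)"
    have sW: "subspace W" unfolding W_def
      by (rule linear_subspace_image[OF matrix_vector_mul_linear subspace_UNIV])
    have nW: "W \<noteq> {0}" using \<open>Q *v u0 \<noteq> 0\<close> unfolding W_def by (metis UNIV_I image_eqI singletonD)
    have iW: "\<forall>x\<in>W. L *v x \<in> W"
    proof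
      fix x assume "x \<in> W"
      then obtain u where "x = Q *v u" by (auto simp: W_def)
      hence "L *v x = Q *v (L *v u)"
        by (simp add: matrix_vector_mul_assoc Q_def P_def sp_comm matrix_mul_assoc[symmetric])
      thus "L *v x \<in> W" by (simp add: W_def)
    qed
    obtain w l where w: "w \<in> W" "w \<noteq> 0" "L *v w = l *\<^sub>R w"
      using sym_eig_in_subspace[OF sym sW nW iW] by blast
    obtain u where wu: "w = Q *v u" using w(1) by (auto simp: W_def)
    have "l \<in> matrix_eigenvalues L" using w by (auto simp: matrix_eigenvalues_def)
    hence "l = 0 \<or> (\<Prod>i\<in>{1..K}. l - mu i) = 0" using eig by auto
    moreover have "Q *v w = (l * (\<Prod>i\<in>{1..K}. l - mu i)) *\<^sub>R w"
      using sp_eig[OF w(3), of mu K] w(3)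
      by (simp add: Q_def P_def matrix_vector_mul_assoc[symmetric] mvs)
    ultimately have Qw: "Q *v w = 0" by auto
    have "w \<bullet> w = u \<bullet> (transpose Q *v w)" using dot_transpose[of Q u w] wu by simp
    also have "\<dots> = 0" using Qsym Qw by simp
    finally show False using w(2) by simp
  qed
  have col: "\<exists>t. P *v x = t *\<^sub>R a" for x
    using Q0 ker[of "P *v x"] by (simp add: Q_def matrix_vector_mul_assoc)
  define t where "t j = (SOME t. P *v axis j 1 = t *\<^sub>R a)" for j
  have Pt: "P $ i $ j = t j * a $ i" for i j
  proof -
    have "P *v axis j 1 = t j *\<^sub>R a" unfolding t_def by (rule someI_ex[OF col])
    hence "(P *v axis j 1) $ i = t j * a $ i" by simp
    moreover have "(P *v axis j 1) $ i = P $ i $ j"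
      by (simp add: matrix_vector_mult_def axis_def sum_delta_mult2)
    ultimately show ?thesis by simp
  qed
  obtain i0 :: 'n where True by simp
  define s where "s = t i0 / a $ i0"
  have tj: "t j = s * a $ j" for j
  proof -
    have "P $ i0 $ j = P $ j $ i0" using Psym by (metis transpose_def vec_lambda_beta)
    hence "t j * a $ i0 = t i0 * a $ j" by (simp add: Pt)
    thus ?thesis using apos[of i0] by (simp add: s_def field_simps)
  qed
  have Pout: "P = s *\<^sub>R outer a" by (simp add: vec_eq_iff Pt tj outer_def mult_ac)
  have h1: "P *v a = (\<Prod>i\<in>{1..K}. 0 - mu i) *\<^sub>R a" unfolding P_def
    by (rule sp_eig) (simp add: La)
  have h2: "P *v a = (s * (a \<bullet> a)) *\<^sub>R a"
    by (simp add: Pout scaleR_matrix_vector_assoc[symmetric] outer_mult)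
  have eq: "(\<Prod>i\<in>{1..K}. 0 - mu i) *\<^sub>R a = (s * (a \<bullet> a)) *\<^sub>R a"
    using h1 h2 by metis
  have "(\<Prod>i\<in>{1..K}. - mu i) * a $ i0 = (s * (a \<bullet> a)) * a $ i0"
    using arg_cong[where f="\<lambda>v. v $ i0", OF eq] by simp
  hence "(\<Prod>i\<in>{1..K}. - mu i) = s * (a \<bullet> a)" using apos[of i0] by simp
  moreover have "a \<bullet> a > 0" using apos[of i0]
    by (metis inner_gt_zero_iff less_irrefl vec_eq_iff zero_index)
  ultimately have "s = (\<Prod>i\<in>{1..K}. - mu i) / (a \<bullet> a)" by (simp add: field_simps)
  thus ?thesis using Pout P_def by simp
qed

theorem theorem4p5:
  fixes E :: "'n::finite \<Rightarrow> 'n \<Rightarrow> bool" and k :: nat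
  assumes "simple_graph E" and "connected_graph E"
    and "2 \<le> k" and "k \<le> CARD('n)"
  shows "(card (matrix_eigenvalues (norm_laplacian E)) = k \<longleftrightarrow>
          (\<exists>mu :: nat \<Rightarrow> real.
             inj_on mu {1..k-1} \<and> (\<forall>i\<in>{1..k-1}. mu i \<noteq> 0) \<and>
             (\<forall>i\<in>{1..k-1}. \<not> invertible (norm_laplacian E - mu i *\<^sub>R mat 1)) \<and>
             shifted_prod (norm_laplacian E) mu (k-1) =
               ((-1)^(k-1) * (\<Prod>i\<in>{1..k-1}. mu i) / (2 * real (graph_size E)))
                 *\<^sub>R outer (sqrt_deg_vec E)))
       \<and> (\<forall>mu :: nat \<Rightarrow> real.
             inj_on mu {1..k-1} \<and> (\<forall>i\<in>{1..k-1}. mu i \<noteq> 0) \<and>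
             (\<forall>i\<in>{1..k-1}. \<not> invertible (norm_laplacian E - mu i *\<^sub>R mat 1)) \<and>
             shifted_prod (norm_laplacian E) mu (k-1) =
               ((-1)^(k-1) * (\<Prod>i\<in>{1..k-1}. mu i) / (2 * real (graph_size E)))
                 *\<^sub>R outer (sqrt_deg_vec E)
           \<longrightarrow> matrix_eigenvalues (norm_laplacian E) = insert 0 (mu ` {1..k-1}))"
proof -
  note sg = assms(1) and cg = assms(2)
  define L where "L = norm_laplacian E"
  define a where "a = sqrt_deg_vec E"
  have n2: "2 \<le> CARD('n)" using assms(3,4) by simp
  have dp: "\<And>i. degree E i > 0" using deg_pos[OF cg n2] .
  have sym: "transpose L = L" unfolding L_def by (rule nl_sym[OF sg dp])
  have La: "L *v a = 0" unfolding L_def a_def by (rule nl_alpha[OF sg dp])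
  have ker: "\<And>x. L *v x = 0 \<Longrightarrow> \<exists>t. x = t *\<^sub>R a"
    unfolding L_def a_def by (rule nl_kernel[OF sg cg dp])
  have apos: "\<And>i. a $ i > 0" using dp by (simp add: a_def sqrt_deg_vec_def)
  have aa: "a \<bullet> a = 2 * real (graph_size E)"
  proof -
    have "a \<bullet> a = (\<Sum>i\<in>UNIV. real (degree E i))"
      by (simp add: inner_vec_def a_def sqrt_deg_vec_def)
    thus ?thesis using handshake[OF sg] by simp
  qed
  obtain i0 :: 'n where True by simp
  have a0: "a \<noteq> 0" using apos[of i0] by (metis less_irrefl zero_index)
  have zero_eig: "0 \<in> matrix_eigenvalues L"
    using La a0 by (auto simp: matrix_eigenvalues_def)
  define K where "K = k - 1"
  have cK: "card {1..K} = K" by simp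
  have part2: "matrix_eigenvalues L = insert 0 (mu ` {1..K})"
    if "\<forall>i\<in>{1..K}. \<not> invertible (L - mu i *\<^sub>R mat 1)"
       "shifted_prod L mu K = c *\<^sub>R outer a" for mu c
    by (rule suff[OF sym La a0 that])
  have A: ?thesis if
    "\<And>mu. (inj_on mu {1..K} \<and> (\<forall>i\<in>{1..K}. mu i \<noteq> 0) \<and>
             (\<forall>i\<in>{1..K}. \<not> invertible (L - mu i *\<^sub>R mat 1)) \<and>
             shifted_prod L mu K =
               ((-1)^K * (\<Prod>i\<in>{1..K}. mu i) / (2 * real (graph_size E))) *\<^sub>R outer a)
          \<Longrightarrow> matrix_eigenvalues L = insert 0 (mu ` {1..K})"
    "card (matrix_eigenvalues L) = k \<longleftrightarrow>
          (\<exists>mu :: nat \<Rightarrow> real.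
             inj_on mu {1..K} \<and> (\<forall>i\<in>{1..K}. mu i \<noteq> 0) \<and>
             (\<forall>i\<in>{1..K}. \<not> invertible (L - mu i *\<^sub>R mat 1)) \<and>
             shifted_prod L mu K =
               ((-1)^K * (\<Prod>i\<in>{1..K}. mu i) / (2 * real (graph_size E))) *\<^sub>R outer a)"
    using that unfolding L_def a_def K_def by blast
  show ?thesis
  proof (rule A)
    fix mu assume "inj_on mu {1..K} \<and> (\<forall>i\<in>{1..K}. mu i \<noteq> 0) \<and>
             (\<forall>i\<in>{1..K}. \<not> invertible (L - mu i *\<^sub>R mat 1)) \<and>
             shifted_prod L mu K =
               ((-1)^K * (\<Prod>i\<in>{1..K}. mu i) / (2 * real (graph_size E))) *\<^sub>R outer a"
    thus "matrix_eigenvalues L = insert 0 (mu ` {1..K})" using part2 by blast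
  next
    show "card (matrix_eigenvalues L) = k \<longleftrightarrow>
          (\<exists>mu :: nat \<Rightarrow> real.
             inj_on mu {1..K} \<and> (\<forall>i\<in>{1..K}. mu i \<noteq> 0) \<and>
             (\<forall>i\<in>{1..K}. \<not> invertible (L - mu i *\<^sub>R mat 1)) \<and>
             shifted_prod L mu K =
               ((-1)^K * (\<Prod>i\<in>{1..K}. mu i) / (2 * real (graph_size E))) *\<^sub>R outer a)"
    proof
      assume ck: "card (matrix_eigenvalues L) = k"
      hence fin: "finite (matrix_eigenvalues L)" using assms(3) by (intro card_ge_0_finite) simp
      define N where "N = matrix_eigenvalues L - {0}"
      have cN: "card N = K" using ck fin zero_eig by (simp add: N_def K_def)
      have finN: "finite N" using fin by (simp add: N_def)
      obtain h where h: "bij_betw h {1..card N} N" using ex_bij_betw_nat_finite_1[OF finN] by blast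
      hence hinj: "inj_on h {1..K}" and him: "h ` {1..K} = N"
        using cN by (auto simp: bij_betw_def)
      have eigs: "matrix_eigenvalues L = insert 0 (h ` {1..K})"
        using him zero_eig by (auto simp: N_def)
      have "shifted_prod L h K = ((\<Prod>i\<in>{1..K}. - h i) / (a \<bullet> a)) *\<^sub>R outer a"
        by (rule nec[OF sym ker apos La eigs])
      also have "(\<Prod>i\<in>{1..K}. - h i) / (a \<bullet> a) =
          (-1)^K * (\<Prod>i\<in>{1..K}. h i) / (2 * real (graph_size E))"
        by (simp add: prod_uminus aa)
      finally have prodeq: "shifted_prod L h K =
          ((-1)^K * (\<Prod>i\<in>{1..K}. h i) / (2 * real (graph_size E))) *\<^sub>R outer a" .
      have "\<forall>i\<in>{1..K}. h i \<noteq> 0" using him by (auto simp: N_def)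
      moreover have "\<forall>i\<in>{1..K}. \<not> invertible (L - h i *\<^sub>R mat 1)"
        using him eig_iff by (auto simp: N_def)
      ultimately show "\<exists>mu :: nat \<Rightarrow> real.
             inj_on mu {1..K} \<and> (\<forall>i\<in>{1..K}. mu i \<noteq> 0) \<and>
             (\<forall>i\<in>{1..K}. \<not> invertible (L - mu i *\<^sub>R mat 1)) \<and>
             shifted_prod L mu K =
               ((-1)^K * (\<Prod>i\<in>{1..K}. mu i) / (2 * real (graph_size E))) *\<^sub>R outer a"
        using hinj prodeq by blast
    next
      assume "\<exists>mu :: nat \<Rightarrow> real.
             inj_on mu {1..K} \<and> (\<forall>i\<in>{1..K}. mu i \<noteq> 0) \<and>
             (\<forall>i\<in>{1..K}. \<not> invertible (L - mu i *\<^sub>R mat 1)) \<and>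
             shifted_prod L mu K =
               ((-1)^K * (\<Prod>i\<in>{1..K}. mu i) / (2 * real (graph_size E))) *\<^sub>R outer a"
      then obtain mu where mu: "inj_on mu {1..K}" "\<forall>i\<in>{1..K}. mu i \<noteq> 0"
             "\<forall>i\<in>{1..K}. \<not> invertible (L - mu i *\<^sub>R mat 1)"
             "shifted_prod L mu K =
               ((-1)^K * (\<Prod>i\<in>{1..K}. mu i) / (2 * real (graph_size E))) *\<^sub>R outer a"
        by blast
      have "matrix_eigenvalues L = insert 0 (mu ` {1..K})" using part2 mu(3,4) by blast
      moreover have "0 \<notin> mu ` {1..K}" using mu(2) by auto
      moreover have "card (mu ` {1..K}) = K" using card_image[OF mu(1)] by simp
      ultimately show "card (matrix_eigenvalues L) = k"
        using assms(3) by (simp add: K_def)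
    qed
  qed
qed

end
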